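(* Let $n\ge3$, $\zeta=2\pi/n$, $m\in\mathbb{Z}$, $a>0$, $V$ smooth. For $k\in\{1,\dots,n\}$ and $z\in\mathbb{C}^2$ let $T_kz=n^{-1/2}\big(e^{(ikI+mJ)\zeta}z,e^{2(ikI+mJ)\zeta}z,\dots,e^{n(ikI+mJ)\zeta}z\big)\in\mathbb{C}^{2n}$. Let $\alpha_k=4\cos(m\zeta)\sin^2(k\zeta/2)$ and $\beta_k=2\sin(m\zeta)\sin(k\zeta)$. Then the Hessian satisfies $D^2H(\mathbf{a}_m)T_kz=T_kB_kz$, where $B_k$ is the $2\times2$ matrix $B_k=\mathrm{diag}(2a^2V''(a^2)-\alpha_k,-\alpha_k)+iJ\beta_k$.
   Context: $J=\begin{pmatrix}0&-1\\1&0\end{pmatrix}$, $I$ the $2\times2$ identity. $\omega=4\sin^2(m\zeta/2)-V'(a^2)$ and $H(u)=\frac12\sum_{j=1}^n\{V(|u_j|^2)+\omega|u_j|^2-|u_{j+1}-u_j|^2\}$ for $u=(u_1,\dots,u_n)\in(\mathbb{R}^2)^n$, indices mod $n$ (the Hamiltonian of the DNLS lattice $i\dot q_j=V'(|q_j|^2)q_j+(q_{j+1}-q_j)+(q_{j-1}-q_j)$ in rotating coordinates $q_j=e^{i\omega t}u_j$). $\mathbf{a}_m=(a_1,\dots,a_n)$ with $a_j=ae^{jm\zeta J}e_1$. The real $2n\times2n$ matrix $D^2H(\mathbf{a}_m)$ acts complex-linearly on $\mathbb{C}^{2n}$. *)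

theory Defs
  imports "HOL-Analysis.Analysis"
begin

text \<open>Lattice points u = (u_0,...,u_{n-1}), u_j in R^2; index j is the paper's index
  j taken mod n (paper: j = 1..n with u_{n+1} = u_1). Values of u at j >= n are irrelevant.\<close>

definition dnls_H :: "nat \<Rightarrow> (real \<Rightarrow> real) \<Rightarrow> real \<Rightarrow> (nat \<Rightarrow> real^2) \<Rightarrow> real" where
  "dnls_H n V \<omega> u = (1/2) * (\<Sum>j<n. V ((norm (u j))\<^sup>2) + \<omega> * (norm (u j))\<^sup>2
                                   - (norm (u (Suc j mod n) - u j))\<^sup>2)"

definition pderiv_coord :: "((nat \<Rightarrow> real^2) \<Rightarrow> real) \<Rightarrow> (nat \<Rightarrow> real^2) \<Rightarrow> nat \<times> 2 \<Rightarrow> real" where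
  "pderiv_coord f u lq = deriv (\<lambda>t. f (u(fst lq := u (fst lq) + t *\<^sub>R axis (snd lq) 1))) 0"

definition hessian :: "((nat \<Rightarrow> real^2) \<Rightarrow> real) \<Rightarrow> (nat \<Rightarrow> real^2) \<Rightarrow> nat \<times> 2 \<Rightarrow> nat \<times> 2 \<Rightarrow> real" where
  "hessian f u jp lq = pderiv_coord (\<lambda>v. pderiv_coord f v lq) u jp"

definition mat_act :: "nat \<Rightarrow> (nat \<times> 2 \<Rightarrow> nat \<times> 2 \<Rightarrow> real) \<Rightarrow> (nat \<Rightarrow> complex^2) \<Rightarrow> (nat \<Rightarrow> complex^2)" where
  "mat_act n M w = (\<lambda>j. \<chi> p. \<Sum>l<n. \<Sum>q\<in>UNIV. complex_of_real (M (j,p) (l,q)) * (w l $ q))"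

text \<open>Rotation e^{\<theta> J} acting on C^2 (J = [[0,-1],[1,0]]).\<close>
definition rotC :: "real \<Rightarrow> complex^2 \<Rightarrow> complex^2" where
  "rotC \<theta> z = vector [cos \<theta> * z$1 - sin \<theta> * z$2, sin \<theta> * z$1 + cos \<theta> * z$2]"

definition Jc :: "complex^2 \<Rightarrow> complex^2" where
  "Jc z = vector [- z$2, z$1]"

text \<open>The equilibrium a_m: a_j = a e^{j m \<zeta> J} e_1.\<close>
definition a_m :: "nat \<Rightarrow> int \<Rightarrow> real \<Rightarrow> nat \<Rightarrow> real^2" where
  "a_m n m a j = vector [a * cos (real j * of_int m * (2*pi/n)), a * sin (real j * of_int m * (2*pi/n))]"

text \<open>T_k z; the block e^{j(ikI+mJ)\<zeta>} z equals e^{ijk\<zeta>} e^{jm\<zeta>J} z since I and J commute.\<close>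
definition T_op :: "nat \<Rightarrow> int \<Rightarrow> nat \<Rightarrow> complex^2 \<Rightarrow> nat \<Rightarrow> complex^2" where
  "T_op n m k z j = (complex_of_real (1 / sqrt (real n)) * cis (real j * real k * (2*pi/n)))
      *s rotC (real j * of_int m * (2*pi/n)) z"

definition B_op :: "nat \<Rightarrow> int \<Rightarrow> real \<Rightarrow> (real \<Rightarrow> real) \<Rightarrow> nat \<Rightarrow> complex^2 \<Rightarrow> complex^2" where
  "B_op n m a V k z =
    (let \<zeta> = 2*pi/n;
         \<alpha> = 4 * cos (of_int m * \<zeta>) * (sin (real k * \<zeta> / 2))\<^sup>2;
         \<beta> = 2 * sin (of_int m * \<zeta>) * sin (real k * \<zeta>)
     in vector [complex_of_real (2 * a\<^sup>2 * deriv (deriv V) (a\<^sup>2) - \<alpha>) * z$1,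
                complex_of_real (- \<alpha>) * z$2]
        + (\<i> * complex_of_real \<beta>) *s Jc z)"

end

theory Submission
  imports Defs
begin


lemma norm2_expand: "(norm (x + s *\<^sub>R c))\<^sup>2 = x \<bullet> x + 2 * s * (x \<bullet> c) + s\<^sup>2 * (c \<bullet> c)"
  for x c :: "'a::real_inner"
  unfolding power2_norm_eq_inner by (simp add: inner_add_left inner_add_right power2_eq_square algebra_simps inner_commute)

lemma D_norm2: "((\<lambda>s. (norm (x + s *\<^sub>R c))\<^sup>2) has_real_derivative (2 * (x \<bullet> c))) (at 0)"
  for x c :: "'a::real_inner"
proof -
  have "((\<lambda>s. x \<bullet> x + 2 * s * (x \<bullet> c) + s\<^sup>2 * (c \<bullet> c)) has_real_derivative (0 + 2 * 1 * (x \<bullet> c) + (2 * 0) * (c \<bullet> c))) (at 0)"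
    by (intro derivative_eq_intros) auto
  then show ?thesis by (simp add: norm2_expand)
qed

lemma D_Vnorm2:
  fixes x c :: "'a::real_inner"
  assumes "\<And>x. V differentiable (at x)"
  shows "((\<lambda>s. V ((norm (x + s *\<^sub>R c))\<^sup>2)) has_real_derivative (deriv V ((norm x)\<^sup>2) * (2 * (x \<bullet> c)))) (at 0)"
proof -
  have "(V has_real_derivative deriv V ((norm (x + 0 *\<^sub>R c))\<^sup>2)) (at ((norm (x + 0 *\<^sub>R c))\<^sup>2))"
    using assms DERIV_deriv_iff_real_differentiable by blast
  from DERIV_chain2[OF this D_norm2] show ?thesis by simp
qed

lemma D_H:
  fixes v c :: "nat \<Rightarrow> real^2"
  assumes dV: "\<And>x. V differentiable (at x)"
  shows "((\<lambda>s. dnls_H n V \<omega> (\<lambda>i. v i + s *\<^sub>R c i)) has_real_derivative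
    (\<Sum>j<n. deriv V ((norm (v j))\<^sup>2) * (v j \<bullet> c j) + \<omega> * (v j \<bullet> c j)
        - (v (Suc j mod n) - v j) \<bullet> (c (Suc j mod n) - c j))) (at 0)"
proof -
  have eq: "dnls_H n V \<omega> (\<lambda>i. v i + s *\<^sub>R c i) = (1/2) * (\<Sum>j<n. V ((norm (v j + s *\<^sub>R c j))\<^sup>2)
     + \<omega> * (norm (v j + s *\<^sub>R c j))\<^sup>2
     - (norm ((v (Suc j mod n) - v j) + s *\<^sub>R (c (Suc j mod n) - c j)))\<^sup>2)" for s
    unfolding dnls_H_def by (simp add: algebra_simps)
  have "((\<lambda>s. (1/2) * (\<Sum>j<n. V ((norm (v j + s *\<^sub>R c j))\<^sup>2)
     + \<omega> * (norm (v j + s *\<^sub>R c j))\<^sup>2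
     - (norm ((v (Suc j mod n) - v j) + s *\<^sub>R (c (Suc j mod n) - c j)))\<^sup>2)) has_real_derivative
     (1/2) * (\<Sum>j<n. deriv V ((norm (v j))\<^sup>2) * (2 * (v j \<bullet> c j)) + \<omega> * (2 * (v j \<bullet> c j))
        - 2 * ((v (Suc j mod n) - v j) \<bullet> (c (Suc j mod n) - c j)))) (at 0)"
    by (intro DERIV_cmult DERIV_sum DERIV_diff DERIV_add DERIV_cmult D_Vnorm2 D_norm2 dV)
  then show ?thesis unfolding eq by (simp add: sum_distrib_left algebra_simps)
qed

lemma suc_mod_iff:
  assumes "j < n" "l < n"
  shows "(Suc j mod n = l) \<longleftrightarrow> (j = (l + n - 1) mod n)"
proof (cases "l = 0")
  case True
  then show ?thesis using assms
    by (metis Suc_pred' add_0 gr0I less_Suc_eq mod_Suc mod_less mod_self nat.distinct(1) Suc_lessI Suc_mod_eq_add3_mod diff_Suc_1 less_irrefl_nat mod_less_divisor)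
next
  case False
  then have "(l + n - 1) mod n = l - 1" using assms
    by (metis Nat.add_diff_assoc2 One_nat_def Suc_leI add.commute add_diff_cancel_left' gr0I le_add_diff_inverse2 less_imp_diff_less mod_add_self1 mod_less neq0_conv)
  then show ?thesis using assms False
    by (metis Suc_lessI Suc_pred' diff_Suc_1 mod_Suc mod_less neq0_conv)
qed

lemma upd_eq: "v(l := v l + s *\<^sub>R e) = (\<lambda>i. v i + s *\<^sub>R (if i = l then e else 0))"
  for v :: "nat \<Rightarrow> 'a::real_vector"
  by (rule ext) simp

definition Gr :: "nat \<Rightarrow> (real \<Rightarrow> real) \<Rightarrow> real \<Rightarrow> nat \<Rightarrow> 2 \<Rightarrow> (nat \<Rightarrow> real^2) \<Rightarrow> real" where
  "Gr n V \<omega> l q v = deriv V ((norm (v l))\<^sup>2) * v l $ q + \<omega> * v l $ q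
     - ((v l - v (Suc l mod n)) $ q + (v l - v ((l + n - 1) mod n)) $ q)"

lemma grad:
  fixes v :: "nat \<Rightarrow> real^2"
  assumes dV: "\<And>x. V differentiable (at x)" and l: "l < n"
  shows "pderiv_coord (dnls_H n V \<omega>) v (l,q) = Gr n V \<omega> l q v"
proof -
  define c where "c = (\<lambda>i. if i = l then axis q (1::real) else 0)"
  have "pderiv_coord (dnls_H n V \<omega>) v (l,q) = deriv (\<lambda>s. dnls_H n V \<omega> (\<lambda>i. v i + s *\<^sub>R c i)) 0"
    unfolding pderiv_coord_def c_def by (simp add: upd_eq)
  also have "\<dots> = (\<Sum>j<n. deriv V ((norm (v j))\<^sup>2) * (v j \<bullet> c j) + \<omega> * (v j \<bullet> c j)
        - (v (Suc j mod n) - v j) \<bullet> (c (Suc j mod n) - c j))"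
    by (rule DERIV_imp_deriv[OF D_H[OF dV]])
  also have "\<dots> = (\<Sum>j<n. deriv V ((norm (v j))\<^sup>2) * (v j \<bullet> c j) + \<omega> * (v j \<bullet> c j))
        - (\<Sum>j<n. (v (Suc j mod n) - v j) \<bullet> c (Suc j mod n)) + (\<Sum>j<n. (v (Suc j mod n) - v j) \<bullet> c j)"
    by (simp add: sum_subtractf inner_diff_right sum.distrib algebra_simps)
  also have "(\<Sum>j<n. deriv V ((norm (v j))\<^sup>2) * (v j \<bullet> c j) + \<omega> * (v j \<bullet> c j))
      = deriv V ((norm (v l))\<^sup>2) * v l $ q + \<omega> * v l $ q"
    using l by (simp add: c_def if_distrib inner_axis sum.If_cases)
  also have "(\<Sum>j<n. (v (Suc j mod n) - v j) \<bullet> c j) = (v (Suc l mod n) - v l) $ q"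
    using l by (simp add: c_def if_distrib inner_axis sum.If_cases)
  also have "(\<Sum>j<n. (v (Suc j mod n) - v j) \<bullet> c (Suc j mod n)) = (\<Sum>j<n. if j = (l + n - 1) mod n then (v l - v j) $ q else 0)"
  proof (rule sum.cong)
    fix j assume "j \<in> {..<n}"
    then have j: "j < n" by simp
    show "(v (Suc j mod n) - v j) \<bullet> c (Suc j mod n) = (if j = (l + n - 1) mod n then (v l - v j) $ q else 0)"
    proof (cases "Suc j mod n = l")
      case True
      then show ?thesis using suc_mod_iff[OF j l] by (simp add: c_def inner_axis)
    next
      case False
      then show ?thesis using suc_mod_iff[OF j l] by (simp add: c_def)
    qed
  qed simp
  also have "\<dots> = (v l - v ((l + n - 1) mod n)) $ q"
    using l by simp
  finally show ?thesis unfolding Gr_def by simp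
qed

lemma D_Gr:
  fixes u c :: "nat \<Rightarrow> real^2"
  assumes dV: "\<And>x. deriv V differentiable (at x)"
  shows "((\<lambda>t. Gr n V \<omega> l q (\<lambda>i. u i + t *\<^sub>R c i)) has_real_derivative
     (deriv (deriv V) ((norm (u l))\<^sup>2) * (2 * (u l \<bullet> c l)) * u l $ q + deriv V ((norm (u l))\<^sup>2) * c l $ q
      + \<omega> * c l $ q - ((c l - c (Suc l mod n)) $ q + (c l - c ((l + n - 1) mod n)) $ q))) (at 0)"
proof -
  have eq: "Gr n V \<omega> l q (\<lambda>i. u i + t *\<^sub>R c i) =
     deriv V ((norm (u l + t *\<^sub>R c l))\<^sup>2) * (u l $ q + t * c l $ q) + \<omega> * (u l $ q + t * c l $ q)
      - (((u l - u (Suc l mod n)) $ q + (u l - u ((l + n - 1) mod n)) $ q)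
         + t * ((c l - c (Suc l mod n)) $ q + (c l - c ((l + n - 1) mod n)) $ q))" for t
    unfolding Gr_def by (simp add: algebra_simps)
  have "((\<lambda>t. deriv V ((norm (u l + t *\<^sub>R c l))\<^sup>2) * (u l $ q + t * c l $ q) + \<omega> * (u l $ q + t * c l $ q)
      - (((u l - u (Suc l mod n)) $ q + (u l - u ((l + n - 1) mod n)) $ q)
         + t * ((c l - c (Suc l mod n)) $ q + (c l - c ((l + n - 1) mod n)) $ q))) has_real_derivative
      (deriv (deriv V) ((norm (u l))\<^sup>2) * (2 * (u l \<bullet> c l)) * (u l $ q + 0 * c l $ q)
       + deriv V ((norm (u l + 0 *\<^sub>R c l))\<^sup>2) * (0 + 1 * c l $ q) + \<omega> * (0 + 1 * c l $ q)
       - (0 + 1 * ((c l - c (Suc l mod n)) $ q + (c l - c ((l + n - 1) mod n)) $ q)))) (at 0)"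
  proof -
    note d1 = D_Vnorm2[OF dV, of "u l" "c l"]
    have d2: "((\<lambda>t. u l $ q + t * c l $ q) has_real_derivative (0 + 1 * c l $ q)) (at 0)"
      by (rule DERIV_add[OF DERIV_const DERIV_cmult_right[OF DERIV_ident]])
    have d3: "((\<lambda>t. ((u l - u (Suc l mod n)) $ q + (u l - u ((l + n - 1) mod n)) $ q)
         + t * ((c l - c (Suc l mod n)) $ q + (c l - c ((l + n - 1) mod n)) $ q)) has_real_derivative
         (0 + 1 * ((c l - c (Suc l mod n)) $ q + (c l - c ((l + n - 1) mod n)) $ q))) (at 0)"
      by (rule DERIV_add[OF DERIV_const DERIV_cmult_right[OF DERIV_ident]])
    show ?thesis
      using DERIV_diff[OF DERIV_add[OF DERIV_mult[OF d1 d2] DERIV_cmult[OF d2, of \<omega>]] d3] by (simp add: mult.commute)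
  qed
  then show ?thesis unfolding eq by simp
qed

lemma hess:
  fixes u :: "nat \<Rightarrow> real^2"
  assumes dV: "\<And>x. V differentiable (at x)" and dV1: "\<And>x. deriv V differentiable (at x)"
    and l: "l < n"
  shows "hessian (dnls_H n V \<omega>) u (j,p) (l,q) =
     (if l = j then deriv (deriv V) ((norm (u l))\<^sup>2) * (2 * u l $ p) * u l $ q
         + (deriv V ((norm (u l))\<^sup>2) + \<omega> - 2) * (if q = p then 1 else 0) else 0)
     + (if Suc l mod n = j then (if q = p then 1 else 0) else 0)
     + (if (l + n - 1) mod n = j then (if q = p then 1 else 0) else 0)"
proof -
  define c where "c = (\<lambda>i. if i = j then axis p (1::real) else 0)"
  have ax: "axis p (1::real) $ q = (if q = p then 1 else 0)" for q by (simp add: axis_def)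
  have G: "(\<lambda>v. pderiv_coord (dnls_H n V \<omega>) v (l,q)) = Gr n V \<omega> l q"
    by (rule ext) (rule grad[OF dV l])
  have "hessian (dnls_H n V \<omega>) u (j,p) (l,q) = deriv (\<lambda>t. Gr n V \<omega> l q (\<lambda>i. u i + t *\<^sub>R c i)) 0"
    unfolding hessian_def G unfolding pderiv_coord_def c_def by (simp add: upd_eq)
  also have "\<dots> = deriv (deriv V) ((norm (u l))\<^sup>2) * (2 * (u l \<bullet> c l)) * u l $ q + deriv V ((norm (u l))\<^sup>2) * c l $ q
      + \<omega> * c l $ q - ((c l - c (Suc l mod n)) $ q + (c l - c ((l + n - 1) mod n)) $ q)"
    by (rule DERIV_imp_deriv[OF D_Gr[OF dV1]])
  also have "\<dots> = (if l = j then deriv (deriv V) ((norm (u l))\<^sup>2) * (2 * u l $ p) * u l $ q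
         + (deriv V ((norm (u l))\<^sup>2) + \<omega> - 2) * (if q = p then 1 else 0) else 0)
     + (if Suc l mod n = j then (if q = p then 1 else 0) else 0)
     + (if (l + n - 1) mod n = j then (if q = p then 1 else 0) else 0)"
    by (simp add: c_def inner_axis ax algebra_simps)
  finally show ?thesis .
qed

lemma delta_q: "(\<Sum>q\<in>UNIV. complex_of_real (if q = p then 1 else 0) * x $ q) = x $ p"
  for x :: "complex^2"
  using exhaust_2[of p] by (auto simp: sum_2)

lemma sumB:
  fixes w :: "nat \<Rightarrow> complex^2"
  assumes j: "j < n"
  shows "(\<Sum>l<n. \<Sum>q\<in>UNIV. complex_of_real (if Suc l mod n = j then (if q = p then 1 else 0) else 0) * w l $ q)
     = w ((j + n - 1) mod n) $ p"
proof -
  have "(\<Sum>l<n. \<Sum>q\<in>UNIV. complex_of_real (if Suc l mod n = j then (if q = p then 1 else 0) else 0) * w l $ q)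
     = (\<Sum>l<n. if l = (j + n - 1) mod n then w l $ p else 0)"
  proof (rule sum.cong)
    fix l assume "l \<in> {..<n}"
    then have l: "l < n" by simp
    show "(\<Sum>q\<in>UNIV. complex_of_real (if Suc l mod n = j then (if q = p then 1 else 0) else 0) * w l $ q)
       = (if l = (j + n - 1) mod n then w l $ p else 0)"
      using suc_mod_iff[OF l j] by (cases "Suc l mod n = j") (simp_all add: delta_q)
  qed simp
  also have "\<dots> = w ((j + n - 1) mod n) $ p" using j by simp
  finally show ?thesis .
qed

lemma sumC:
  fixes w :: "nat \<Rightarrow> complex^2"
  assumes j: "j < n"
  shows "(\<Sum>l<n. \<Sum>q\<in>UNIV. complex_of_real (if (l + n - 1) mod n = j then (if q = p then 1 else 0) else 0) * w l $ q)
     = w (Suc j mod n) $ p"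
proof -
  have "(\<Sum>l<n. \<Sum>q\<in>UNIV. complex_of_real (if (l + n - 1) mod n = j then (if q = p then 1 else 0) else 0) * w l $ q)
     = (\<Sum>l<n. if l = Suc j mod n then w l $ p else 0)"
  proof (rule sum.cong)
    fix l assume "l \<in> {..<n}"
    then have l: "l < n" by simp
    have "((l + n - 1) mod n = j) = (l = Suc j mod n)" using suc_mod_iff[OF j l] by auto
    then show "(\<Sum>q\<in>UNIV. complex_of_real (if (l + n - 1) mod n = j then (if q = p then 1 else 0) else 0) * w l $ q)
       = (if l = Suc j mod n then w l $ p else 0)"
      by (cases "(l + n - 1) mod n = j") (simp_all add: delta_q)
  qed simp
  also have "\<dots> = w (Suc j mod n) $ p" using j by simp
  finally show ?thesis .
qed

lemma sumA:
  fixes w :: "nat \<Rightarrow> complex^2" and F :: "nat \<Rightarrow> 2 \<Rightarrow> real"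
  assumes j: "j < n"
  shows "(\<Sum>l<n. \<Sum>q\<in>UNIV. complex_of_real (if l = j then F l q else 0) * w l $ q)
     = (\<Sum>q\<in>UNIV. complex_of_real (F j q) * w j $ q)"
proof -
  have "(\<Sum>l<n. \<Sum>q\<in>UNIV. complex_of_real (if l = j then F l q else 0) * w l $ q)
     = (\<Sum>l<n. if l = j then (\<Sum>q\<in>UNIV. complex_of_real (F l q) * w l $ q) else 0)"
    by (rule sum.cong) auto
  also have "\<dots> = (\<Sum>q\<in>UNIV. complex_of_real (F j q) * w j $ q)" using j by simp
  finally show ?thesis .
qed

lemma matact:
  fixes u :: "nat \<Rightarrow> real^2" and w :: "nat \<Rightarrow> complex^2"
  assumes dV: "\<And>x. V differentiable (at x)" and dV1: "\<And>x. deriv V differentiable (at x)"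
    and j: "j < n"
  shows "mat_act n (hessian (dnls_H n V \<omega>) u) w j $ p =
     complex_of_real (deriv (deriv V) ((norm (u j))\<^sup>2) * (2 * u j $ p)) * (\<Sum>q\<in>UNIV. complex_of_real (u j $ q) * w j $ q)
     + complex_of_real (deriv V ((norm (u j))\<^sup>2) + \<omega> - 2) * w j $ p
     + w ((j + n - 1) mod n) $ p + w (Suc j mod n) $ p"
proof -
  define F where "F = (\<lambda>l q. deriv (deriv V) ((norm (u l))\<^sup>2) * (2 * u l $ p) * u l $ q
         + (deriv V ((norm (u l))\<^sup>2) + \<omega> - 2) * (if q = p then 1 else (0::real)))"
  have "mat_act n (hessian (dnls_H n V \<omega>) u) w j $ p =
     (\<Sum>l<n. \<Sum>q\<in>UNIV. complex_of_real (if l = j then F l q else 0) * w l $ q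
       + complex_of_real (if Suc l mod n = j then (if q = p then 1 else 0) else 0) * w l $ q
       + complex_of_real (if (l + n - 1) mod n = j then (if q = p then 1 else 0) else 0) * w l $ q)"
    unfolding mat_act_def vec_lambda_beta
    by (intro sum.cong refl) (simp only: hess[OF dV dV1] F_def distrib_right of_real_add lessThan_iff)
  also have "\<dots> = (\<Sum>q\<in>UNIV. complex_of_real (F j q) * w j $ q) + w ((j + n - 1) mod n) $ p + w (Suc j mod n) $ p"
    by (simp only: sum.distrib sumA[OF j] sumB[OF j] sumC[OF j])
  also have "(\<Sum>q\<in>UNIV. complex_of_real (F j q) * w j $ q) =
     complex_of_real (deriv (deriv V) ((norm (u j))\<^sup>2) * (2 * u j $ p)) * (\<Sum>q\<in>UNIV. complex_of_real (u j $ q) * w j $ q)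
     + complex_of_real (deriv V ((norm (u j))\<^sup>2) + \<omega> - 2) * w j $ p"
    using exhaust_2[of p] by (auto simp: F_def sum_2 algebra_simps)
  finally show ?thesis .
qed



lemma cis_expand: "cis x = complex_of_real (cos x) + \<i> * complex_of_real (sin x)"
  by (simp add: complex_eq_iff)

lemma sin_half_sq: "(sin (x/2))\<^sup>2 = (1 - cos x) / 2" for x :: real
  using cos_double[of "x/2"] sin_squared_eq[of "x/2"] by simp

lemma core:
  fixes z :: "complex^2" and c :: complex and a D2 th mu ka ph :: real
  defines "al \<equiv> 4 * cos mu * (sin (ka / 2))\<^sup>2" and "be \<equiv> 2 * sin mu * sin ka"
  assumes p: "p = 1 \<or> p = 2"
  shows "complex_of_real (D2 * (2 * (vector [a * cos th, a * sin th] :: real^2) $ p)) *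
       (complex_of_real (a * cos th) * ((c * cis ph) *s rotC th z) $ 1 + complex_of_real (a * sin th) * ((c * cis ph) *s rotC th z) $ 2)
     + complex_of_real (- 2 * cos mu) * ((c * cis ph) *s rotC th z) $ p
     + ((c * cis (ph - ka)) *s rotC (th - mu) z) $ p + ((c * cis (ph + ka)) *s rotC (th + mu) z) $ p
   = ((c * cis ph) *s rotC th (vector [complex_of_real (2 * a\<^sup>2 * D2 - al) * z$1, complex_of_real (- al) * z$2]
        + (\<i> * complex_of_real be) *s Jc z)) $ p"
proof -
  have s: "complex_of_real (sin th) ^ 2 = 1 - complex_of_real (cos th) ^ 2"
    by (metis of_real_1 of_real_diff of_real_power sin_squared_eq)
  have al: "al = 2 * cos mu * (1 - cos ka)" unfolding al_def sin_half_sq by simp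
  have e: "complex_of_real (sin th) ^ 2 + complex_of_real (cos th) ^ 2 = 1" using s by simp
  note simps = rotC_def Jc_def al be_def cis_expand cos_add sin_add cos_diff sin_diff vector_2 vector_add_component vector_smult_component of_real_mult of_real_add of_real_diff of_real_minus of_real_numeral of_real_power of_real_1 cos_of_real sin_of_real
  have i2: "\<i> * \<i> = -1" by simp
  show ?thesis using p
  proof (elim disjE)
    assume "p = 1" show ?thesis unfolding \<open>p = 1\<close>
      apply (simp only: simps)
      using e i2 by algebra
  next
    assume "p = 2" show ?thesis unfolding \<open>p = 2\<close>
      apply (simp only: simps)
      using e i2 by algebra
  qed
qed


lemma norm_vec2: "(norm (vector [x, y] :: real^2))\<^sup>2 = x\<^sup>2 + y\<^sup>2"
  unfolding power2_norm_eq_inner by (simp add: inner_vec_def sum_2 power2_eq_square)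

lemma rotC_per: "rotC (y + 2 * pi * of_int m) z = rotC y z"
proof -
  have c1: "cos (y + 2 * pi * of_int m) = cos y" by (simp add: cos_add)
  have s1: "sin (y + 2 * pi * of_int m) = sin y" by (simp add: sin_add)
  have c2: "cos (complex_of_real (y + 2 * pi * of_int m)) = cos (complex_of_real y)" by (simp only: cos_of_real c1)
  have s2: "sin (complex_of_real (y + 2 * pi * of_int m)) = sin (complex_of_real y)" by (simp only: sin_of_real s1)
  show ?thesis unfolding rotC_def c1 s1 c2 s2 ..
qed

lemma Tper:
  fixes x :: real and n k :: nat and m :: int
  assumes n: "n > 0"
  shows "(c * cis ((x + real n) * real k * (2*pi/n))) *s rotC ((x + real n) * of_int m * (2*pi/n)) z
       = (c * cis (x * real k * (2*pi/n))) *s rotC (x * of_int m * (2*pi/n)) z"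
proof -
  have e1: "(x + real n) * real k * (2*pi/n) = x * real k * (2*pi/n) + 2 * pi * real k"
    using n by (simp add: field_simps)
  have e2: "(x + real n) * of_int m * (2*pi/n) = x * of_int m * (2*pi/n) + 2 * pi * of_int m"
    using n by (simp add: field_simps)
  have "cis (x * real k * (2*pi/n) + 2 * pi * real k) = cis (x * real k * (2*pi/n))"
    by (simp add: cis_mult[symmetric])
  then show ?thesis unfolding e1 e2 rotC_per by simp
qed

lemma T_real: "T_op n m k z i = (complex_of_real (1 / sqrt (real n)) * cis (real i * real k * (2*pi/n))) *s rotC (real i * of_int m * (2*pi/n)) z"
  by (simp add: T_op_def)

lemma Tshift:
  fixes x y :: real and n k :: nat
  assumes "x = y + 1"
  shows "(c * cis (x * real k * (2*pi/n))) *s rotC (x * of_int m * (2*pi/n)) z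
     = (c * cis (y * real k * (2*pi/n) + real k * (2*pi/n))) *s rotC (y * of_int m * (2*pi/n) + of_int m * (2*pi/n)) z"
proof -
  have e1: "x * real k * (2*pi/n) = y * real k * (2*pi/n) + real k * (2*pi/n)" by (simp add: assms distrib_right add_divide_distrib)
  have e2: "x * of_int m * (2*pi/n) = y * of_int m * (2*pi/n) + of_int m * (2*pi/n)" by (simp add: assms distrib_right add_divide_distrib)
  show ?thesis by (simp only: e1 e2)
qed

lemma Tshiftm:
  fixes x y :: real and n k :: nat
  assumes "x = y - 1"
  shows "(c * cis (x * real k * (2*pi/n))) *s rotC (x * of_int m * (2*pi/n)) z
     = (c * cis (y * real k * (2*pi/n) - real k * (2*pi/n))) *s rotC (y * of_int m * (2*pi/n) - of_int m * (2*pi/n)) z"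
proof -
  have e1: "x * real k * (2*pi/n) = y * real k * (2*pi/n) - real k * (2*pi/n)" by (simp add: assms left_diff_distrib diff_divide_distrib)
  have e2: "x * of_int m * (2*pi/n) = y * of_int m * (2*pi/n) - of_int m * (2*pi/n)" by (simp add: assms left_diff_distrib diff_divide_distrib)
  show ?thesis by (simp only: e1 e2)
qed

lemma Tsuc:
  assumes j: "j < n"
  shows "T_op n m k z (Suc j mod n) = (complex_of_real (1 / sqrt (real n)) * cis (real j * real k * (2*pi/n) + real k * (2*pi/n)))
     *s rotC (real j * of_int m * (2*pi/n) + of_int m * (2*pi/n)) z"
proof (cases "Suc j < n")
  case True
  then show ?thesis unfolding T_real by (intro Tshift) simp
next
  case False
  then have jn: "Suc j = n" using j by simp
  then have h: "real (Suc j mod n) = 0" by simp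
  have "T_op n m k z (Suc j mod n) = (complex_of_real (1 / sqrt (real n)) * cis (0 * real k * (2*pi/n))) *s rotC (0 * of_int m * (2*pi/n)) z"
    by (simp only: T_real h)
  also have "\<dots> = (complex_of_real (1 / sqrt (real n)) * cis ((0 + real n) * real k * (2*pi/n))) *s rotC ((0 + real n) * of_int m * (2*pi/n)) z"
    by (rule Tper[symmetric]) (use j in simp)
  also have "\<dots> = (complex_of_real (1 / sqrt (real n)) * cis (real j * real k * (2*pi/n) + real k * (2*pi/n)))
     *s rotC (real j * of_int m * (2*pi/n) + of_int m * (2*pi/n)) z"
    by (intro Tshift) (simp add: jn[symmetric])
  finally show ?thesis .
qed

lemma Tpred:
  assumes j: "j < n"
  shows "T_op n m k z ((j + n - 1) mod n) = (complex_of_real (1 / sqrt (real n)) * cis (real j * real k * (2*pi/n) - real k * (2*pi/n)))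
     *s rotC (real j * of_int m * (2*pi/n) - of_int m * (2*pi/n)) z"
proof (cases "j = 0")
  case False
  then have "(j + n - 1) mod n = j - 1" using j
    by (metis Nat.add_diff_assoc2 add.commute add_diff_cancel_left' le_add_diff_inverse2 less_imp_diff_less mod_add_self1 mod_less neq0_conv One_nat_def Suc_leI)
  then show ?thesis unfolding T_real using False by (intro Tshiftm) simp
next
  case True
  then have h: "real ((j + n - 1) mod n) = real j - 1 + real n" using j by (simp add: of_nat_diff)
  have "T_op n m k z ((j + n - 1) mod n) = (complex_of_real (1 / sqrt (real n)) * cis ((real j - 1 + real n) * real k * (2*pi/n))) *s rotC ((real j - 1 + real n) * of_int m * (2*pi/n)) z"
    by (simp only: T_real h)
  also have "\<dots> = (complex_of_real (1 / sqrt (real n)) * cis ((real j - 1) * real k * (2*pi/n))) *s rotC ((real j - 1) * of_int m * (2*pi/n)) z"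
    by (rule Tper) (use j in simp)
  also have "\<dots> = (complex_of_real (1 / sqrt (real n)) * cis (real j * real k * (2*pi/n) - real k * (2*pi/n)))
     *s rotC (real j * of_int m * (2*pi/n) - of_int m * (2*pi/n)) z"
    by (intro Tshiftm) simp
  finally show ?thesis .
qed

theorem proposition1:
  fixes n :: nat and m :: int and a :: real and V :: "real \<Rightarrow> real"
    and k :: nat and z :: "complex^2"
  assumes "n \<ge> 3" and "a > 0"
    and "\<And>i x. ((deriv ^^ i) V) differentiable (at x)"
    and "1 \<le> k" and "k \<le> n"
  shows "let \<zeta> = 2*pi/n;
             \<omega> = 4 * (sin (of_int m * \<zeta> / 2))\<^sup>2 - deriv V (a\<^sup>2)
         in \<forall>j<n. mat_act n (hessian (dnls_H n V \<omega>) (a_m n m a)) (T_op n m k z) j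
                   = T_op n m k (B_op n m a V k z) j"
proof -
  have dV: "\<And>x. V differentiable (at x)" using assms(3)[of 0] by simp
  have dV1: "\<And>x. deriv V differentiable (at x)" using assms(3)[of 1] by simp
  let ?\<omega> = "4 * (sin (of_int m * (2*pi/n) / 2))\<^sup>2 - deriv V (a\<^sup>2)"
  let ?c = "complex_of_real (1 / sqrt (real n))"
  let ?ph = "real j * real k * (2*pi/n)"
  show ?thesis unfolding Let_def
  proof (intro allI impI)
    fix j assume j: "j < n"
    let ?ph = "real j * real k * (2*pi/n)"
    let ?th = "real j * of_int m * (2*pi/n)"
    let ?mu = "of_int m * (2*pi/n)"
    let ?ka = "real k * (2*pi/n)"
    have hA: "a_m n m a j = vector [a * cos ?th, a * sin ?th]" by (simp add: a_m_def)
    have hW: "T_op n m k z j = (?c * cis ?ph) *s rotC ?th z" by (simp add: T_op_def)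
    have hN: "(norm (a_m n m a j))\<^sup>2 = a\<^sup>2"
      unfolding hA norm_vec2 by (simp add: power_mult_distrib algebra_simps flip: distrib_left)
    have hS: "(\<Sum>q\<in>UNIV. complex_of_real ((vector [a * cos ?th, a * sin ?th] :: real^2) $ q) * ((?c * cis ?ph) *s rotC ?th z) $ q)
       = complex_of_real (a * cos ?th) * ((?c * cis ?ph) *s rotC ?th z) $ 1 + complex_of_real (a * sin ?th) * ((?c * cis ?ph) *s rotC ?th z) $ 2"
      unfolding sum_2 by simp
    have hO: "deriv V (a\<^sup>2) + ?\<omega> - 2 = - 2 * cos ?mu"
      unfolding sin_half_sq by (simp add: field_simps)
    show "mat_act n (hessian (dnls_H n V ?\<omega>) (a_m n m a)) (T_op n m k z) j = T_op n m k (B_op n m a V k z) j"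
    proof (subst vec_eq_iff, intro allI)
      fix p :: 2
      have p: "p = 1 \<or> p = 2" by (rule exhaust_2)
      have "mat_act n (hessian (dnls_H n V ?\<omega>) (a_m n m a)) (T_op n m k z) j $ p
        = complex_of_real (deriv (deriv V) (a\<^sup>2) * (2 * (vector [a * cos ?th, a * sin ?th] :: real^2) $ p)) *
           (complex_of_real (a * cos ?th) * ((?c * cis ?ph) *s rotC ?th z) $ 1 + complex_of_real (a * sin ?th) * ((?c * cis ?ph) *s rotC ?th z) $ 2)
         + complex_of_real (- 2 * cos ?mu) * ((?c * cis ?ph) *s rotC ?th z) $ p
         + ((?c * cis (?ph - ?ka)) *s rotC (?th - ?mu) z) $ p + ((?c * cis (?ph + ?ka)) *s rotC (?th + ?mu) z) $ p"
        unfolding matact[OF dV dV1 j] hN Tpred[OF j] Tsuc[OF j] unfolding hA hW unfolding hS hO ..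
      also have "\<dots> = T_op n m k (B_op n m a V k z) j $ p"
        unfolding T_op_def B_op_def Let_def by (rule core[OF p])
      finally show "mat_act n (hessian (dnls_H n V ?\<omega>) (a_m n m a)) (T_op n m k z) j $ p = T_op n m k (B_op n m a V k z) j $ p" .
    qed
  qed
qed


end
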